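(* Let $(\Omega,\mathcal{F},P)$ be a probability space with a filtration $\mathbb{F}=(\mathcal{F}_t)_{t\in[0,T]}$ satisfying the usual conditions, and let $S=(S_t)_{t\in[0,T]}$ be a c\`adl\`ag $\mathbb{R}^d$-valued process adapted to $\mathbb{F}$. Then $S$ is sticky with respect to $\mathbb{F}$ if and only if for every deterministic $t\in[0,T]$ and every strictly positive $\mathcal{F}_t$-measurable random variable $\kappa$, $$P\Big(\sup_{u\in[t,T]}|S_u-S_t|<\kappa\,\Big|\,\mathcal{F}_t\Big)>0\quad\text{a.s.}$$
   Context: The usual conditions mean that $\mathbb{F}$ is right-continuous and $\mathcal{F}_0$ contains all $P$-null sets of $\mathcal{F}$ ($\mathcal{F}_0$ need not be trivial). $|\cdot|$ is the Euclidean norm. A process $S$ is called sticky with respect to $\mathbb{F}$ if for every $\mathbb{F}$-stopping time $\tau$ (with values in $[0,T]$) and every strictly positive $\mathcal{F}_\tau$-measurable random variable $\kappa$, $P(\sup_{u\in[\tau,T]}|S_u-S_\tau|<\kappa\mid\mathcal{F}_\tau)>0$ a.s. *)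

theory Defs
  imports "HOL-Probability.Probability"
begin

definition usual_filtration :: "'a measure \<Rightarrow> (real \<Rightarrow> 'a measure) \<Rightarrow> real \<Rightarrow> bool" where
  "usual_filtration M F T \<longleftrightarrow>
     (\<forall>t\<in>{0..T}. subalgebra M (F t)) \<and>
     (\<forall>s\<in>{0..T}. \<forall>t\<in>{0..T}. s \<le> t \<longrightarrow> sets (F s) \<subseteq> sets (F t)) \<and>
     (\<forall>t\<in>{0..<T}. sets (F t) = (\<Inter>s\<in>{t<..T}. sets (F s))) \<and>
     null_sets M \<subseteq> sets (F 0)"

definition cadlag_on :: "'a measure \<Rightarrow> real \<Rightarrow> (real \<Rightarrow> 'a \<Rightarrow> 'd::euclidean_space) \<Rightarrow> bool" where
  "cadlag_on M T S \<longleftrightarrow>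
     (\<forall>\<omega>\<in>space M.
        (\<forall>t\<in>{0..<T}. continuous (at_right t) (\<lambda>u. S u \<omega>)) \<and>
        (\<forall>t\<in>{0<..T}. \<exists>l. ((\<lambda>u. S u \<omega>) \<longlongrightarrow> l) (at_left t)))"

definition adapted_on :: "(real \<Rightarrow> 'a measure) \<Rightarrow> real \<Rightarrow> (real \<Rightarrow> 'a \<Rightarrow> 'd::euclidean_space) \<Rightarrow> bool" where
  "adapted_on F T S \<longleftrightarrow> (\<forall>t\<in>{0..T}. S t \<in> borel_measurable (F t))"

definition stopping_time_on :: "'a measure \<Rightarrow> (real \<Rightarrow> 'a measure) \<Rightarrow> real \<Rightarrow> ('a \<Rightarrow> real) \<Rightarrow> bool" where
  "stopping_time_on M F T \<tau> \<longleftrightarrow>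
     (\<forall>\<omega>\<in>space M. \<tau> \<omega> \<in> {0..T}) \<and>
     (\<forall>t\<in>{0..T}. {\<omega>\<in>space M. \<tau> \<omega> \<le> t} \<in> sets (F t))"

definition stopped_sigma :: "'a measure \<Rightarrow> (real \<Rightarrow> 'a measure) \<Rightarrow> real \<Rightarrow> ('a \<Rightarrow> real) \<Rightarrow> 'a measure" where
  "stopped_sigma M F T \<tau> = sigma (space M)
     {A \<in> sets M. \<forall>t\<in>{0..T}. A \<inter> {\<omega>\<in>space M. \<tau> \<omega> \<le> t} \<in> sets (F t)}"

definition condP :: "'a measure \<Rightarrow> 'a measure \<Rightarrow> 'a set \<Rightarrow> 'a \<Rightarrow> real" where
  "condP M G A = real_cond_exp M G (indicator A)"

definition small_osc_event :: "'a measure \<Rightarrow> real \<Rightarrow> (real \<Rightarrow> 'a \<Rightarrow> 'd::euclidean_space)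
    \<Rightarrow> ('a \<Rightarrow> real) \<Rightarrow> ('a \<Rightarrow> real) \<Rightarrow> 'a set" where
  "small_osc_event M T S \<tau> \<kappa> =
     {\<omega>\<in>space M. (SUP u\<in>{\<tau> \<omega>..T}. norm (S u \<omega> - S (\<tau> \<omega>) \<omega>)) < \<kappa> \<omega>}"

definition sticky :: "'a measure \<Rightarrow> (real \<Rightarrow> 'a measure) \<Rightarrow> real \<Rightarrow> (real \<Rightarrow> 'a \<Rightarrow> 'd::euclidean_space) \<Rightarrow> bool" where
  "sticky M F T S \<longleftrightarrow>
     (\<forall>\<tau> \<kappa>. stopping_time_on M F T \<tau> \<and> \<kappa> \<in> borel_measurable (stopped_sigma M F T \<tau>) \<and>
        (\<forall>\<omega>\<in>space M. 0 < \<kappa> \<omega>) \<longrightarrow>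
        (AE \<omega> in M. 0 < condP M (stopped_sigma M F T \<tau>) (small_osc_event M T S \<tau> \<kappa>) \<omega>))"

end

theory Submission
  imports Defs
begin

lemma sfs_of_prob:
  assumes "prob_space M" "subalgebra M G"
  shows "sigma_finite_subalgebra M G"
proof -
  interpret prob_space M by fact
  show ?thesis
    by (rule finite_measure_subalgebra_is_sigma_finite, rule finite_measure_subalgebra.intro)
       (auto simp: finite_measure_axioms finite_measure_subalgebra_axioms_def assms(2))
qed

lemma condP_int:
  assumes "prob_space M" "subalgebra M G" "B \<in> sets M" "A \<in> sets G"
  shows "measure M (A \<inter> B) = (LINT x:A|M. condP M G B x)"
proof -
  interpret prob_space M by fact
  have sf: "sigma_finite_subalgebra M G" using sfs_of_prob assms by blast
  have AM: "A \<in> sets M" using assms(2,4) by (auto simp: subalgebra_def)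
  have int: "integrable M (indicator B :: 'a \<Rightarrow> real)"
    using assms(3) by (intro integrable_real_indicator) (auto simp: emeasure_eq_measure)
  have "(LINT x:A|M. condP M G B x) = (LINT x:A|M. indicator B x)"
    unfolding condP_def using sigma_finite_subalgebra.real_cond_exp_intA[OF sf int assms(4)] by simp
  also have "\<dots> = (\<integral>x. indicator (A \<inter> B) x \<partial>M)"
    unfolding set_lebesgue_integral_def by (simp add: indicator_inter_arith)
  also have "\<dots> = measure M (A \<inter> B)" using AM assms(3) by simp
  finally show ?thesis by simp
qed

lemma condP_pos_iff:
  assumes "prob_space M" "subalgebra M G" "B \<in> sets M"
  shows "(AE \<omega> in M. 0 < condP M G B \<omega>) \<longleftrightarrow> (\<forall>A\<in>sets G. 0 < measure M A \<longrightarrow> 0 < measure M (A \<inter> B))"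
proof -
  interpret prob_space M by fact
  have sf: "sigma_finite_subalgebra M G" using sfs_of_prob assms by blast
  have int: "integrable M (indicator B :: 'a \<Rightarrow> real)"
    using assms(3) by (intro integrable_real_indicator) (auto simp: emeasure_eq_measure)
  have intZ: "integrable M (condP M G B)"
    unfolding condP_def using sigma_finite_subalgebra.real_cond_exp_int(1)[OF sf int] .
  have measZ: "condP M G B \<in> borel_measurable G" unfolding condP_def by simp
  show ?thesis
  proof
    assume ae: "AE \<omega> in M. 0 < condP M G B \<omega>"
    show "\<forall>A\<in>sets G. 0 < measure M A \<longrightarrow> 0 < measure M (A \<inter> B)"
    proof (intro ballI impI)
      fix A assume AG: "A \<in> sets G" and pos: "0 < measure M A"
      have AM: "A \<in> sets M" using assms(2) AG by (auto simp: subalgebra_def)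
      have eq: "measure M (A \<inter> B) = (LINT x:A|M. condP M G B x)"
        using condP_int assms AG by blast
      show "0 < measure M (A \<inter> B)"
      proof (rule ccontr)
        assume "\<not> 0 < measure M (A \<inter> B)"
        then have z: "(\<integral>x. indicator A x * condP M G B x \<partial>M) = 0"
          using eq measure_nonneg[of M "A \<inter> B"] unfolding set_lebesgue_integral_def by simp
        have intA: "integrable M (\<lambda>x. indicator A x * condP M G B x)"
          using integrable_mult_indicator[OF AM intZ] by simp
        have "AE x in M. 0 \<le> indicator A x * condP M G B x"
          using ae by eventually_elim (auto simp: indicator_def)
        then have "AE x in M. indicator A x * condP M G B x = 0"
          using integral_nonneg_eq_0_iff_AE[OF intA] z by simp
        with ae have "AE x in M. x \<notin> A"
          by eventually_elim (auto simp: indicator_def)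
        then have "emeasure M A = 0"
          using AE_iff_measurable[OF AM, of "\<lambda>x. x \<notin> A"] sets.sets_into_space[OF AM] by auto
        then show False using pos by (simp add: measure_def)
      qed
    qed
  next
    assume H: "\<forall>A\<in>sets G. 0 < measure M A \<longrightarrow> 0 < measure M (A \<inter> B)"
    define A where "A = {x\<in>space G. condP M G B x \<le> 0}"
    have AG: "A \<in> sets G" unfolding A_def using measZ by measurable
    have AM: "A \<in> sets M" using assms(2) AG by (auto simp: subalgebra_def)
    have sp: "space G = space M" using assms(2) by (auto simp: subalgebra_def)
    have "0 \<le> (\<integral>x. - (indicator A x *\<^sub>R condP M G B x) \<partial>M)"
      by (intro integral_nonneg_AE AE_I2) (auto simp: A_def indicator_def)
    then have li: "(LINT x:A|M. condP M G B x) \<le> 0"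
      unfolding set_lebesgue_integral_def by simp
    have "measure M A = 0"
    proof (rule ccontr)
      assume "measure M A \<noteq> 0"
      then have "0 < measure M A" using measure_nonneg[of M A] by linarith
      then have "0 < measure M (A \<inter> B)" using H AG by blast
      then show False using li condP_int[OF assms AG] by linarith
    qed
    then have "emeasure M A = 0" using emeasure_eq_measure by simp
    then show "AE \<omega> in M. 0 < condP M G B \<omega>"
      using AE_iff_measurable[OF AM, of "\<lambda>x. 0 < condP M G B x"] sp unfolding A_def by (simp add: not_less)
  qed
qed

lemma rc_le:
  fixes f :: "real \<Rightarrow> 'd::real_normed_vector"
  assumes cont: "continuous (at_right u) f" and ub: "u < b"
    and H: "\<And>r. r \<in> \<rat> \<Longrightarrow> u < r \<Longrightarrow> r < b \<Longrightarrow> norm (f r - y) \<le> c"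
  shows "norm (f u - y) \<le> c"
proof -
  let ?S = "\<rat> \<inter> {u<..<b}"
  have t: "(f \<longlongrightarrow> f u) (at u within ?S)"
    using cont unfolding continuous_within
    by (rule tendsto_within_subset) auto
  have t2: "((\<lambda>r. norm (f r - y)) \<longlongrightarrow> norm (f u - y)) (at u within ?S)"
    by (intro tendsto_intros t)
  have ev: "eventually (\<lambda>r. norm (f r - y) \<le> c) (at u within ?S)"
    using H by (auto simp: eventually_at_filter)
  have "u islimpt ?S"
  proof (rule islimptI)
    fix T assume "u \<in> T" "open T"
    then obtain e where e: "e > 0" "ball u e \<subseteq> T" using open_contains_ball by blast
    obtain r where r: "r \<in> \<rat>" "u < r" "r < min (u + e) b"
      using Rats_dense_in_real[of u "min (u+e) b"] e ub by auto
    then have "r \<in> ball u e" by (auto simp: dist_real_def)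
    then show "\<exists>y\<in>?S. y \<in> T \<and> y \<noteq> u" using r e by (intro bexI[of _ r]) auto
  qed
  then have nb: "at u within ?S \<noteq> bot" using trivial_limit_within by blast
  show ?thesis using tendsto_upperbound[OF t2 ev nb] .
qed

lemma cadlag_bounded:
  fixes f :: "real \<Rightarrow> 'd::real_normed_vector"
  assumes rc: "\<forall>t\<in>{0..<T}. continuous (at_right t) f"
    and ll: "\<forall>t\<in>{0<..T}. \<exists>l. (f \<longlongrightarrow> l) (at_left t)"
  shows "\<exists>B. \<forall>u\<in>{0..T}. norm (f u) \<le> B"
proof -
  have loc: "\<exists>d>0. \<exists>B. \<forall>u\<in>{0..T}. dist u t < d \<longrightarrow> norm (f u) \<le> B" if t: "t \<in> {0..T}" for t
  proof -
    obtain d1 B1 where d1: "d1 > 0" "\<forall>u\<in>{0..T}. t < u \<and> u < t + d1 \<longrightarrow> norm (f u) \<le> B1"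
    proof (cases "t < T")
      case True
      then have "continuous (at_right t) f" using rc t by auto
      then have "eventually (\<lambda>u. dist (f u) (f t) < 1) (at_right t)"
        unfolding continuous_within using tendstoD by fastforce
      then obtain b where b: "b > t" "\<forall>u>t. u < b \<longrightarrow> dist (f u) (f t) < 1"
        unfolding eventually_at_right_field by blast
      show ?thesis
      proof (rule that[of "b - t" "norm (f t) + 1"])
        show "b - t > 0" using b by simp
        show "\<forall>u\<in>{0..T}. t < u \<and> u < t + (b - t) \<longrightarrow> norm (f u) \<le> norm (f t) + 1"
        proof (intro ballI impI)
          fix u assume "u \<in> {0..T}" "t < u \<and> u < t + (b - t)"
          then have "dist (f u) (f t) < 1" using b by auto
          then show "norm (f u) \<le> norm (f t) + 1"
            using norm_triangle_ineq2[of "f u" "f t"] by (simp add: dist_norm)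
        qed
      qed
    next
      case False
      then show ?thesis using that[of 1 0] t by auto
    qed
    obtain d2 B2 where d2: "d2 > 0" "\<forall>u\<in>{0..T}. t - d2 < u \<and> u < t \<longrightarrow> norm (f u) \<le> B2"
    proof (cases "0 < t")
      case True
      then obtain l where l: "(f \<longlongrightarrow> l) (at_left t)" using ll t by force
      then have "eventually (\<lambda>u. dist (f u) l < 1) (at_left t)"
        using tendstoD by fastforce
      then obtain b where b: "b < t" "\<forall>u<t. b < u \<longrightarrow> dist (f u) l < 1"
        unfolding eventually_at_left_field by blast
      show ?thesis
      proof (rule that[of "t - b" "norm l + 1"])
        show "t - b > 0" using b by simp
        show "\<forall>u\<in>{0..T}. t - (t - b) < u \<and> u < t \<longrightarrow> norm (f u) \<le> norm l + 1"
        proof (intro ballI impI)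
          fix u assume "u \<in> {0..T}" "t - (t - b) < u \<and> u < t"
          then have "dist (f u) l < 1" using b by auto
          then show "norm (f u) \<le> norm l + 1"
            using norm_triangle_ineq2[of "f u" l] by (simp add: dist_norm)
        qed
      qed
    next
      case False
      then show ?thesis using that[of 1 0] t by auto
    qed
    show ?thesis
    proof (intro exI conjI)
      show "min d1 d2 > 0" using d1 d2 by simp
      show "\<forall>u\<in>{0..T}. dist u t < min d1 d2 \<longrightarrow> norm (f u) \<le> max (norm (f t)) (max B1 B2)"
      proof (intro ballI impI)
        fix u assume u: "u \<in> {0..T}" "dist u t < min d1 d2"
        consider "u = t" | "t < u" | "u < t" by linarith
        then show "norm (f u) \<le> max (norm (f t)) (max B1 B2)"
        proof cases
          case 2 then have "norm (f u) \<le> B1" using d1 u by (auto simp: dist_real_def)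
          then show ?thesis by linarith
        next
          case 3 then have "norm (f u) \<le> B2" using d2 u by (auto simp: dist_real_def)
          then show ?thesis by linarith
        qed simp
      qed
    qed
  qed
  then obtain d B where dB: "\<And>t. t \<in> {0..T} \<Longrightarrow> d t > 0 \<and> (\<forall>u\<in>{0..T}. dist u t < d t \<longrightarrow> norm (f u) \<le> B t)"
    by metis
  have "compact {0..T::real}" by simp
  moreover have "{0..T} \<subseteq> (\<Union>t\<in>{0..T}. ball t (d t))" using dB by force
  ultimately obtain K where K: "K \<subseteq> {0..T}" "finite K" "{0..T} \<subseteq> (\<Union>t\<in>K. ball t (d t))"
    using compactE_image[of "{0..T}" "{0..T}" "\<lambda>t. ball t (d t)"] by auto
  show ?thesis
  proof (intro exI ballI)
    fix u assume u: "u \<in> {0..T}"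
    then obtain t where t: "t \<in> K" "u \<in> ball t (d t)" using K by blast
    then have "norm (f u) \<le> B t" using dB[of t] K u by (auto simp: dist_commute)
    also have "B t \<le> Max (B ` K)" using t K by auto
    finally show "norm (f u) \<le> Max (B ` K)" .
  qed
qed

lemma sup_eq:
  fixes f :: "real \<Rightarrow> 'd::real_normed_vector"
  assumes rc: "\<forall>s\<in>{0..<T}. continuous (at_right s) f"
    and B: "\<forall>u\<in>{0..T}. norm (f u) \<le> B" and t: "t \<in> {0..T}"
  shows "(SUP u\<in>{t..T}. norm (f u - f t)) =
         (SUP r\<in>({q\<in>\<rat>. 0 \<le> q \<and> q \<le> T} \<union> {T}). if t \<le> r then norm (f r - f t) else 0)"
    (is "?X = ?Y")
proof -
  let ?I = "{q\<in>\<rat>. 0 \<le> q \<and> q \<le> T} \<union> {T}"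
  let ?H = "\<lambda>r. if t \<le> r then norm (f r - f t) else 0"
  have bnd: "norm (f u - f t) \<le> 2 * B" if "u \<in> {0..T}" for u
  proof -
    have "norm (f u) \<le> B" "norm (f t) \<le> B" using B that t by auto
    then show ?thesis using norm_triangle_ineq4[of "f u" "f t"] by linarith
  qed
  have bddX: "bdd_above ((\<lambda>u. norm (f u - f t)) ` {t..T})"
    using bnd t by (intro bdd_aboveI2[of _ _ "2*B"]) auto
  have bddY: "bdd_above (?H ` ?I)"
  proof (intro bdd_aboveI2[of _ _ "2*B"])
    fix r assume "r \<in> ?I"
    then have "r \<in> {0..T}" using t by auto
    then show "?H r \<le> 2 * B" using bnd[of r] bnd[of t] t by auto
  qed
  show ?thesis
  proof (rule antisym)
    show "?X \<le> ?Y"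
    proof (rule cSUP_least)
      show "{t..T} \<noteq> {}" using t by auto
      fix u assume u: "u \<in> {t..T}"
      show "norm (f u - f t) \<le> ?Y"
      proof (cases "u = T")
        case True
        then show ?thesis using u by (intro cSUP_upper2[OF bddY, of T]) auto
      next
        case False
        then have uT: "u < T" using u by auto
        show ?thesis
        proof (rule rc_le[where f=f and u=u and b=T])
          show "continuous (at_right u) f" using rc u t uT by auto
          show "u < T" by fact
          fix r assume r: "r \<in> \<rat>" "u < r" "r < T"
          then have "r \<in> ?I" using u t by auto
          moreover have "t \<le> r" using u r by auto
          ultimately show "norm (f r - f t) \<le> ?Y" by (intro cSUP_upper2[OF bddY, of r]) auto
        qed
      qed
    qed
    show "?Y \<le> ?X"
    proof (rule cSUP_least)
      show "?I \<noteq> {}" by auto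
      fix r assume r: "r \<in> ?I"
      show "?H r \<le> ?X"
      proof (cases "t \<le> r")
        case True
        then show ?thesis using r t by (intro cSUP_upper2[OF bddX, of r]) auto
      next
        case False
        then show ?thesis using t by (intro cSUP_upper2[OF bddX, of t]) auto
      qed
    qed
  qed
qed

lemma S_tau_meas:
  fixes S :: "real \<Rightarrow> 'a \<Rightarrow> 'd::euclidean_space"
  assumes T: "0 \<le> T" and Sm: "\<forall>t\<in>{0..T}. S t \<in> borel_measurable M"
    and rc: "\<forall>\<omega>\<in>space M. \<forall>t\<in>{0..<T}. continuous (at_right t) (\<lambda>u. S u \<omega>)"
    and tm: "\<tau> \<in> borel_measurable M" and tr: "\<forall>\<omega>\<in>space M. \<tau> \<omega> \<in> {0..T}"
  shows "(\<lambda>\<omega>. S (\<tau> \<omega>) \<omega>) \<in> borel_measurable M"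
proof -
  define p where "p n k = max 0 (min T (real_of_int k / 2^n))" for n :: nat and k :: int
  define tn where "tn n \<omega> = p n \<lceil>\<tau> \<omega> * 2^n\<rceil>" for n \<omega>
  have meas: "(\<lambda>\<omega>. S (tn n \<omega>) \<omega>) \<in> borel_measurable M" for n
  proof -
    have g: "(\<lambda>\<omega>. \<lceil>\<tau> \<omega> * 2^n\<rceil>) \<in> M \<rightarrow>\<^sub>M count_space UNIV"
      by (rule measurable_compose[OF _ measurable_real_ceiling]) (use tm in measurable)
    have "p n k \<in> {0..T}" for k using T by (auto simp: p_def)
    then have "(\<lambda>\<omega>. S (p n k) \<omega>) \<in> borel_measurable M" for k using Sm by blast
    then show ?thesis unfolding tn_def
      by (rule measurable_compose_countable[where f="\<lambda>k \<omega>. S (p n k) \<omega>", OF _ g])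
  qed
  have conv: "(\<lambda>n. S (tn n \<omega>) \<omega>) \<longlonglongrightarrow> S (\<tau> \<omega>) \<omega>" if w: "\<omega> \<in> space M" for \<omega>
  proof -
    have ge: "\<tau> \<omega> \<le> tn n \<omega>" for n
    proof -
      have "\<tau> \<omega> * 2^n \<le> of_int \<lceil>\<tau> \<omega> * 2^n\<rceil>" by (rule le_of_int_ceiling)
      then have "\<tau> \<omega> \<le> of_int \<lceil>\<tau> \<omega> * 2^n\<rceil> / 2^n" by (simp add: field_simps)
      then show ?thesis using tr w by (auto simp: tn_def p_def)
    qed
    have le: "tn n \<omega> \<le> \<tau> \<omega> + (1/2)^n" for n
    proof -
      have "of_int \<lceil>\<tau> \<omega> * 2^n\<rceil> \<le> \<tau> \<omega> * 2^n + 1" by (rule of_int_ceiling_le_add_one)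
      then have "of_int \<lceil>\<tau> \<omega> * 2^n\<rceil> / 2^n \<le> \<tau> \<omega> + (1/2)^n" by (simp add: field_simps power_divide)
      moreover have "0 \<le> \<tau> \<omega>" using tr w by auto
      ultimately show ?thesis using ge[of n] by (auto simp: tn_def p_def)
    qed
    have tt: "(\<lambda>n. tn n \<omega>) \<longlonglongrightarrow> \<tau> \<omega>"
    proof (rule tendsto_sandwich[of "\<lambda>n. \<tau> \<omega>" _ _ "\<lambda>n. \<tau> \<omega> + (1/2)^n"])
      show "\<forall>\<^sub>F n in sequentially. \<tau> \<omega> \<le> tn n \<omega>" using ge by simp
      show "\<forall>\<^sub>F n in sequentially. tn n \<omega> \<le> \<tau> \<omega> + (1/2)^n" using le by simp
      show "(\<lambda>n. \<tau> \<omega>) \<longlonglongrightarrow> \<tau> \<omega>" by simp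
      have "(\<lambda>n. \<tau> \<omega> + (1/2::real)^n) \<longlonglongrightarrow> \<tau> \<omega> + 0"
        by (intro tendsto_intros LIMSEQ_power_zero) simp
      then show "(\<lambda>n. \<tau> \<omega> + (1/2::real)^n) \<longlonglongrightarrow> \<tau> \<omega>" by simp
    qed
    show ?thesis
    proof (cases "\<tau> \<omega> = T")
      case True
      then have "tn n \<omega> = T" for n using ge[of n] T by (auto simp: tn_def p_def)
      then show ?thesis using True by simp
    next
      case False
      then have "\<tau> \<omega> < T" using tr w by auto
      then have "continuous (at_right (\<tau> \<omega>)) (\<lambda>u. S u \<omega>)" using rc w tr by auto
      then have c: "continuous (at (\<tau> \<omega>) within {\<tau> \<omega>..}) (\<lambda>u. S u \<omega>)"
        by (simp add: at_within_Ici_at_right)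
      show ?thesis
        by (rule continuous_within_tendsto_compose'[OF c _ tt, simplified])
           (use ge in auto)
    qed
  qed
  show ?thesis by (rule borel_measurable_LIMSEQ_metric[OF meas conv])
qed

lemma osc_meas:
  fixes S :: "real \<Rightarrow> 'a \<Rightarrow> 'd::euclidean_space"
  assumes T: "0 \<le> T" and Sm: "\<forall>t\<in>{0..T}. S t \<in> borel_measurable M"
    and cad: "cadlag_on M T S"
    and tm: "\<tau> \<in> borel_measurable M" and tr: "\<forall>\<omega>\<in>space M. \<tau> \<omega> \<in> {0..T}"
    and km: "\<kappa> \<in> borel_measurable M"
  shows "small_osc_event M T S \<tau> \<kappa> \<in> sets M"
proof -
  let ?I = "{q\<in>\<rat>. 0 \<le> q \<and> q \<le> T} \<union> {T}"
  define H where "H r \<omega> = (if \<tau> \<omega> \<le> r then norm (S r \<omega> - S (\<tau> \<omega>) \<omega>) else 0)" for r \<omega>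
  have rc: "\<forall>\<omega>\<in>space M. \<forall>t\<in>{0..<T}. continuous (at_right t) (\<lambda>u. S u \<omega>)"
    using cad unfolding cadlag_on_def by blast
  have Stm: "(\<lambda>\<omega>. S (\<tau> \<omega>) \<omega>) \<in> borel_measurable M"
    by (rule S_tau_meas[OF T Sm rc tm tr])
  have bnd: "\<exists>B. \<forall>u\<in>{0..T}. norm (S u \<omega>) \<le> B" if "\<omega> \<in> space M" for \<omega>
    using cadlag_bounded[of T "\<lambda>u. S u \<omega>"] cad that unfolding cadlag_on_def by blast
  have eq: "(SUP u\<in>{\<tau> \<omega>..T}. norm (S u \<omega> - S (\<tau> \<omega>) \<omega>)) = (SUP r\<in>?I. H r \<omega>)"
    if w: "\<omega> \<in> space M" for \<omega>
  proof -
    obtain B where B: "\<forall>u\<in>{0..T}. norm (S u \<omega>) \<le> B" using bnd w by blast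
    show ?thesis unfolding H_def
      by (rule sup_eq[where f="\<lambda>u. S u \<omega>"]) (use rc w B tr in auto)
  qed
  have Hm: "H r \<in> borel_measurable M" if "r \<in> ?I" for r
  proof -
    have "S r \<in> borel_measurable M" using that T Sm by auto
    then show ?thesis unfolding H_def using Stm tm by measurable
  qed
  have bdd: "bdd_above ((\<lambda>r. H r \<omega>) ` ?I)" if w: "\<omega> \<in> space M" for \<omega>
  proof -
    obtain B where B: "\<forall>u\<in>{0..T}. norm (S u \<omega>) \<le> B" using bnd w by blast
    show ?thesis
    proof (rule bdd_aboveI2[of _ _ "2*B"])
      fix r assume "r \<in> ?I"
      then have r: "r \<in> {0..T}" using T by auto
      have n1: "norm (S r \<omega>) \<le> B" and n2: "norm (S (\<tau> \<omega>) \<omega>) \<le> B" using B r tr w by auto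
      have nb: "0 \<le> B" using n1 norm_ge_zero[of "S r \<omega>"] by linarith
      show "H r \<omega> \<le> 2 * B" unfolding H_def
        using norm_triangle_ineq4[of "S r \<omega>" "S (\<tau> \<omega>) \<omega>"] n1 n2 nb by auto
    qed
  qed
  have cI: "countable ?I"
    by (rule countable_Un[OF countable_subset[OF _ countable_rat]]) auto
  have supm: "(\<lambda>\<omega>. SUP r\<in>?I. H r \<omega>) \<in> borel_measurable M"
    by (rule borel_measurable_cSUP[OF cI Hm bdd])
  have "small_osc_event M T S \<tau> \<kappa> = {\<omega>\<in>space M. (SUP r\<in>?I. H r \<omega>) < \<kappa> \<omega>}"
    unfolding small_osc_event_def using eq by auto
  also have "\<dots> \<in> sets M" using supm km by measurable
  finally show ?thesis .
qed

lemma filt_facts: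
  assumes "usual_filtration M F T" "t \<in> {0..T}"
  shows "space (F t) = space M" "sets (F t) \<subseteq> sets M" "subalgebra M (F t)"
  using assms unfolding usual_filtration_def subalgebra_def by auto

lemma filt_mono:
  assumes "usual_filtration M F T" "s \<in> {0..T}" "t \<in> {0..T}" "s \<le> t"
  shows "sets (F s) \<subseteq> sets (F t)"
  using assms unfolding usual_filtration_def by auto

lemma stopped_sets:
  assumes uf: "usual_filtration M F T" and st: "stopping_time_on M F T \<tau>"
    and A: "A \<in> sets (stopped_sigma M F T \<tau>)"
  shows "A \<in> sets M \<and> (\<forall>s\<in>{0..T}. A \<inter> {\<omega>\<in>space M. \<tau> \<omega> \<le> s} \<in> sets (F s))"
proof -
  let ?C = "{A \<in> sets M. \<forall>t\<in>{0..T}. A \<inter> {\<omega>\<in>space M. \<tau> \<omega> \<le> t} \<in> sets (F t)}"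
  have "?C \<subseteq> Pow (space M)" using sets.sets_into_space by auto
  then have "sets (stopped_sigma M F T \<tau>) = sigma_sets (space M) ?C"
    unfolding stopped_sigma_def by (simp add: sets_measure_of)
  then have "A \<in> sigma_sets (space M) ?C" using A by simp
  then show ?thesis
  proof (induction rule: sigma_sets.induct)
    case (Basic a) then show ?case by auto
  next
    case Empty then show ?case by auto
  next
    case (Compl a)
    have "(space M - a) \<inter> {\<omega>\<in>space M. \<tau> \<omega> \<le> s} \<in> sets (F s)" if s: "s \<in> {0..T}" for s
    proof -
      have E: "{\<omega>\<in>space M. \<tau> \<omega> \<le> s} \<in> sets (F s)" using st s unfolding stopping_time_on_def by auto
      have "(space M - a) \<inter> {\<omega>\<in>space M. \<tau> \<omega> \<le> s} = {\<omega>\<in>space M. \<tau> \<omega> \<le> s} - (a \<inter> {\<omega>\<in>space M. \<tau> \<omega> \<le> s})"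
        by auto
      also have "\<dots> \<in> sets (F s)" using E Compl s by auto
      finally show ?thesis .
    qed
    then show ?case using Compl by auto
  next
    case (Union a)
    have "(\<Union>i. a i) \<inter> {\<omega>\<in>space M. \<tau> \<omega> \<le> s} \<in> sets (F s)" if s: "s \<in> {0..T}" for s
    proof -
      have "(\<Union>i. a i) \<inter> {\<omega>\<in>space M. \<tau> \<omega> \<le> s} = (\<Union>i. a i \<inter> {\<omega>\<in>space M. \<tau> \<omega> \<le> s})" by auto
      also have "\<dots> \<in> sets (F s)"
        by (rule sets.countable_UN) (use Union s in blast)
      finally show ?thesis .
    qed
    then show ?case using Union by auto
  qed
qed

lemma stopped_space: "space (stopped_sigma M F T \<tau>) = space M"
proof -
  have "{A \<in> sets M. \<forall>t\<in>{0..T}. A \<inter> {\<omega>\<in>space M. \<tau> \<omega> \<le> t} \<in> sets (F t)} \<subseteq> Pow (space M)"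
    using sets.sets_into_space by auto
  then show ?thesis unfolding stopped_sigma_def by (rule space_measure_of)
qed

lemma stopped_subalg:
  assumes uf: "usual_filtration M F T" and st: "stopping_time_on M F T \<tau>"
  shows "subalgebra M (stopped_sigma M F T \<tau>)"
proof -
  have "sets (stopped_sigma M F T \<tau>) \<subseteq> sets M"
  proof
    fix A assume "A \<in> sets (stopped_sigma M F T \<tau>)"
    then show "A \<in> sets M" using stopped_sets[OF uf st] by blast
  qed
  then show ?thesis unfolding subalgebra_def using stopped_space[of M F T \<tau>] by simp
qed

lemma stopped_const_sets:
  assumes uf: "usual_filtration M F T" and t: "t \<in> {0..T}"
  shows "sets (stopped_sigma M F T (\<lambda>_. t)) = sets (F t)"
proof -
  let ?C = "{A \<in> sets M. \<forall>s\<in>{0..T}. A \<inter> {\<omega>\<in>space M. t \<le> s} \<in> sets (F s)}"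
  have C: "?C = sets (F t)"
  proof
    show "?C \<subseteq> sets (F t)"
    proof
      fix A assume "A \<in> ?C"
      then have "A \<inter> {\<omega>\<in>space M. t \<le> t} \<in> sets (F t)" "A \<subseteq> space M" using t sets.sets_into_space by blast+
      then have "A \<inter> space M \<in> sets (F t)" "A \<subseteq> space M" by simp_all
      then show "A \<in> sets (F t)" by (simp add: Int_absorb2)
    qed
    show "sets (F t) \<subseteq> ?C"
    proof
      fix A assume A: "A \<in> sets (F t)"
      have "A \<in> sets M" using filt_facts[OF uf t] A by auto
      moreover have "A \<inter> {\<omega>\<in>space M. t \<le> s} \<in> sets (F s)" if s: "s \<in> {0..T}" for s
      proof (cases "t \<le> s")
        case True
        have "A \<subseteq> space M" using sets.sets_into_space[OF A] filt_facts[OF uf t] by auto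
        then have "A \<inter> {\<omega>\<in>space M. t \<le> s} = A" using True by auto
        then show ?thesis using filt_mono[OF uf t s True] A by auto
      qed simp
      ultimately show "A \<in> ?C" by auto
    qed
  qed
  have "?C \<subseteq> Pow (space M)" using sets.sets_into_space by auto
  then have "sets (stopped_sigma M F T (\<lambda>_. t)) = sigma_sets (space M) ?C"
    unfolding stopped_sigma_def by (simp add: sets_measure_of)
  also have "\<dots> = sigma_sets (space (F t)) (sets (F t))" using C filt_facts[OF uf t] by simp
  also have "\<dots> = sets (F t)" by (rule sets.sigma_sets_eq)
  finally show ?thesis .
qed

lemma condP_cong_sets:
  assumes "space G = space G'" "sets G = sets G'"
  shows "condP M G B = condP M G' B"
proof -
  have "subalgebra M G = subalgebra M G'" "\<And>N. restr_to_subalg N G = restr_to_subalg N G'"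
    unfolding subalgebra_def restr_to_subalg_def using assms by simp_all
  then show ?thesis unfolding condP_def real_cond_exp_def nn_cond_exp_def by simp
qed

lemma sticky_of_det:
  fixes M :: "'a measure" and F :: "real \<Rightarrow> 'a measure" and T :: real
    and S :: "real \<Rightarrow> 'a \<Rightarrow> 'd::euclidean_space"
  assumes P: "prob_space M" and uf: "usual_filtration M F T" and cad: "cadlag_on M T S"
    and ad: "adapted_on F T S"
    and H: "\<forall>t\<in>{0..T}. \<forall>\<kappa>. \<kappa> \<in> borel_measurable (F t) \<and> (\<forall>\<omega>\<in>space M. 0 < \<kappa> \<omega>) \<longrightarrow>
       (AE \<omega> in M. 0 < condP M (F t) (small_osc_event M T S (\<lambda>_. t) \<kappa>) \<omega>)"
    and st: "stopping_time_on M F T \<tau>" and km: "\<kappa> \<in> borel_measurable (stopped_sigma M F T \<tau>)"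
    and kp: "\<forall>\<omega>\<in>space M. 0 < \<kappa> \<omega>"
  shows "AE \<omega> in M. 0 < condP M (stopped_sigma M F T \<tau>) (small_osc_event M T S \<tau> \<kappa>) \<omega>"
proof -
  interpret prob_space M by fact
  define G where "G = stopped_sigma M F T \<tau>"
  have tr: "\<forall>\<omega>\<in>space M. \<tau> \<omega> \<in> {0..T}" using st unfolding stopping_time_on_def by auto
  obtain \<omega>0 where "\<omega>0 \<in> space M" using not_empty by blast
  then have T: "0 \<le> T" using tr by fastforce
  have Et: "{\<omega>\<in>space M. \<tau> \<omega> \<le> t} \<in> sets (F t)" if "t \<in> {0..T}" for t
    using st that unfolding stopping_time_on_def by auto
  have SmF: "S t \<in> borel_measurable (F t)" if "t \<in> {0..T}" for t
    using ad that unfolding adapted_on_def by auto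
  have Sm: "\<forall>t\<in>{0..T}. S t \<in> borel_measurable M"
    using SmF filt_facts(3)[OF uf] measurable_from_subalg by blast
  have rc: "\<forall>\<omega>\<in>space M. \<forall>t\<in>{0..<T}. continuous (at_right t) (\<lambda>u. S u \<omega>)"
    using cad unfolding cadlag_on_def by blast
  have tm: "\<tau> \<in> borel_measurable M"
    unfolding borel_measurable_iff_le
  proof
    fix a
    show "{w\<in>space M. \<tau> w \<le> a} \<in> sets M"
    proof (cases "a < 0")
      case True
      then have "{w\<in>space M. \<tau> w \<le> a} = {}" using tr by force
      then show ?thesis by (metis sets.empty_sets)
    next
      case False
      show ?thesis
      proof (cases "T \<le> a")
        case True
        then have "{w\<in>space M. \<tau> w \<le> a} = space M" using tr by force
        then show ?thesis by (metis sets.top)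
      next
        case False2: False
        then have "a \<in> {0..T}" using False by auto
        then show ?thesis using Et filt_facts(2)[OF uf] by blast
      qed
    qed
  qed
  have GS: "subalgebra M G" unfolding G_def by (rule stopped_subalg[OF uf st])
  have spG: "space G = space M" unfolding G_def by (rule stopped_space)
  have kmM: "\<kappa> \<in> borel_measurable M" using measurable_from_subalg[OF GS] km unfolding G_def by blast
  have Bm: "small_osc_event M T S \<tau> \<kappa> \<in> sets M"
    by (rule osc_meas[OF T Sm cad tm tr kmM])
  show ?thesis unfolding G_def[symmetric]
  proof (subst condP_pos_iff[OF P GS Bm], intro ballI impI)
    fix A assume AG: "A \<in> sets G" and Apos: "0 < measure M A"
    have AM: "A \<in> sets M" and AE: "\<And>s. s \<in> {0..T} \<Longrightarrow> A \<inter> {\<omega>\<in>space M. \<tau> \<omega> \<le> s} \<in> sets (F s)"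
      using stopped_sets[OF uf st] AG unfolding G_def by blast+
    define I where "I = {q\<in>\<rat>. 0 \<le> q \<and> q \<le> T} \<union> {T}"
    define kq where "kq q \<omega> = (if \<tau> \<omega> \<le> q then \<kappa> \<omega> / 4 else 1)" for q \<omega>
    define D where "D q = {\<omega>\<in>space M. \<omega> \<in> A \<and> \<tau> \<omega> \<le> q \<and>
       (\<forall>r::rat. \<tau> \<omega> \<le> of_rat r \<and> of_rat r \<le> q \<longrightarrow> norm (S (of_rat r) \<omega> - S q \<omega>) \<le> kq q \<omega>)}" for q
    have Iq: "q \<in> {0..T}" if "q \<in> I" for q using that T unfolding I_def by auto
    have cI: "countable I" unfolding I_def
      by (rule countable_Un[OF countable_subset[OF _ countable_rat]]) auto
    have kqm: "kq q \<in> borel_measurable (F q)" if qI: "q \<in> I" for q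
      unfolding borel_measurable_iff_le
    proof
      fix a
      have q: "q \<in> {0..T}" using Iq qI by blast
      have sp: "space (F q) = space M" using filt_facts(1)[OF uf q] .
      have "{\<omega>\<in>space G. \<kappa> \<omega> / 4 \<le> a} \<in> sets G" using km unfolding G_def[symmetric] by measurable
      then have "{\<omega>\<in>space M. \<kappa> \<omega> / 4 \<le> a} \<in> sets G" using spG by simp
      then have K1: "{\<omega>\<in>space M. \<kappa> \<omega> / 4 \<le> a} \<inter> {\<omega>\<in>space M. \<tau> \<omega> \<le> q} \<in> sets (F q)"
        using stopped_sets[OF uf st] q unfolding G_def by blast
      have K2: "(if 1 \<le> a then space M - {\<omega>\<in>space M. \<tau> \<omega> \<le> q} else {}) \<in> sets (F q)"
        using Et[OF q] sets.compl_sets[OF Et[OF q]] sp by auto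
      have "{\<omega>\<in>space (F q). kq q \<omega> \<le> a} = ({\<omega>\<in>space M. \<kappa> \<omega> / 4 \<le> a} \<inter> {\<omega>\<in>space M. \<tau> \<omega> \<le> q}) \<union>
          (if 1 \<le> a then space M - {\<omega>\<in>space M. \<tau> \<omega> \<le> q} else {})"
        by (auto simp: kq_def sp)
      also have "\<dots> \<in> sets (F q)" using K1 K2 by auto
      finally show "{\<omega>\<in>space (F q). kq q \<omega> \<le> a} \<in> sets (F q)" .
    qed
    have Dm: "D q \<in> sets (F q)" if qI: "q \<in> I" for q
    proof -
      have q: "q \<in> {0..T}" using Iq qI by blast
      have sp: "space (F q) = space M" using filt_facts(1)[OF uf q] .
      have "{\<omega>\<in>space (F q). \<forall>r::rat. \<tau> \<omega> \<le> of_rat r \<and> of_rat r \<le> q \<longrightarrow> norm (S (of_rat r) \<omega> - S q \<omega>) \<le> kq q \<omega>} \<in> sets (F q)"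
      proof (rule sets.sets_Collect_countable_All)
        fix r :: rat
        show "{\<omega>\<in>space (F q). \<tau> \<omega> \<le> of_rat r \<and> of_rat r \<le> q \<longrightarrow> norm (S (of_rat r) \<omega> - S q \<omega>) \<le> kq q \<omega>} \<in> sets (F q)"
        proof (cases "0 \<le> (of_rat r :: real) \<and> of_rat r \<le> q")
          case True
          let ?r = "of_rat r :: real"
          have r: "?r \<in> {0..T}" using True q by auto
          have Er: "{\<omega>\<in>space M. \<tau> \<omega> \<le> ?r} \<in> sets (F q)"
            using Et[OF r] filt_mono[OF uf r q] True by blast
          have "S ?r \<in> borel_measurable (F q)"
            using SmF[OF r] measurable_mono[of borel borel "F ?r" "F q"] filt_mono[OF uf r q] True
              filt_facts(1)[OF uf r] sp by blast
          then have Nm: "{\<omega>\<in>space (F q). norm (S ?r \<omega> - S q \<omega>) \<le> kq q \<omega>} \<in> sets (F q)"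
            using SmF[OF q] kqm[OF qI] by measurable
          have "{\<omega>\<in>space (F q). \<tau> \<omega> \<le> ?r \<and> ?r \<le> q \<longrightarrow> norm (S ?r \<omega> - S q \<omega>) \<le> kq q \<omega>}
              = (space M - {\<omega>\<in>space M. \<tau> \<omega> \<le> ?r}) \<union> {\<omega>\<in>space (F q). norm (S ?r \<omega> - S q \<omega>) \<le> kq q \<omega>}"
            using True sp by auto
          also have "\<dots> \<in> sets (F q)" using Er Nm sets.compl_sets[OF Er] sp by auto
          finally show ?thesis .
        next
          case False
          have "{\<omega>\<in>space (F q). \<tau> \<omega> \<le> of_rat r \<and> of_rat r \<le> q \<longrightarrow> norm (S (of_rat r) \<omega> - S q \<omega>) \<le> kq q \<omega>} = space (F q)"
          proof -
            have "\<forall>\<omega>\<in>space M. \<not> (\<tau> \<omega> \<le> of_rat r \<and> of_rat r \<le> q)"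
            proof (intro ballI notI)
              fix \<omega> assume w: "\<omega> \<in> space M" and h: "\<tau> \<omega> \<le> of_rat r \<and> of_rat r \<le> q"
              have "0 \<le> \<tau> \<omega>" using tr w by auto
              with h False show False by linarith
            qed
            then show ?thesis using sp by auto
          qed
          then show ?thesis by (metis sets.top)
        qed
      qed
      then have "(A \<inter> {\<omega>\<in>space M. \<tau> \<omega> \<le> q}) \<inter> {\<omega>\<in>space (F q). \<forall>r::rat. \<tau> \<omega> \<le> of_rat r \<and> of_rat r \<le> q \<longrightarrow> norm (S (of_rat r) \<omega> - S q \<omega>) \<le> kq q \<omega>} \<in> sets (F q)"
        using AE[OF q] by auto
      also have "(A \<inter> {\<omega>\<in>space M. \<tau> \<omega> \<le> q}) \<inter> {\<omega>\<in>space (F q). \<forall>r::rat. \<tau> \<omega> \<le> of_rat r \<and> of_rat r \<le> q \<longrightarrow> norm (S (of_rat r) \<omega> - S q \<omega>) \<le> kq q \<omega>} = D q"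
        unfolding D_def using sp sets.sets_into_space[OF AM] by auto
      finally show ?thesis .
    qed
    have DM: "D q \<in> sets M" if "q \<in> I" for q
      using Dm[OF that] filt_facts(2)[OF uf Iq[OF that]] by blast
    have cover: "A \<subseteq> (\<Union>q\<in>I. D q)"
    proof
      fix \<omega> assume wA: "\<omega> \<in> A"
      then have w: "\<omega> \<in> space M" using sets.sets_into_space[OF AM] by auto
      have kp': "0 < \<kappa> \<omega>" using kp w by auto
      show "\<omega> \<in> (\<Union>q\<in>I. D q)"
      proof (cases "\<tau> \<omega> = T")
        case True
        have "T \<in> I" unfolding I_def by auto
        moreover have "\<omega> \<in> D T" unfolding D_def kq_def using True w wA kp' by auto
        ultimately show ?thesis by blast
      next
        case False
        then have tT: "\<tau> \<omega> < T" using tr w by force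
        then have "continuous (at_right (\<tau> \<omega>)) (\<lambda>u. S u \<omega>)" using rc w tr by auto
        then have "eventually (\<lambda>u. dist (S u \<omega>) (S (\<tau> \<omega>) \<omega>) < \<kappa> \<omega> / 8) (at_right (\<tau> \<omega>))"
          unfolding continuous_within by (rule tendstoD) (use kp' in simp)
        then obtain b where b: "b > \<tau> \<omega>" "\<forall>u>\<tau> \<omega>. u < b \<longrightarrow> dist (S u \<omega>) (S (\<tau> \<omega>) \<omega>) < \<kappa> \<omega> / 8"
          unfolding eventually_at_right_field by blast
        obtain q where q: "q \<in> \<rat>" "\<tau> \<omega> < q" "q < min b T"
          using Rats_dense_in_real[of "\<tau> \<omega>" "min b T"] b tT by auto
        have qI: "q \<in> I" unfolding I_def using q tr w by auto
        have dq: "dist (S q \<omega>) (S (\<tau> \<omega>) \<omega>) < \<kappa> \<omega> / 8" using b q by auto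
        have tq: "\<tau> \<omega> \<le> q" using q by simp
        have RR: "norm (S (of_rat r) \<omega> - S q \<omega>) \<le> \<kappa> \<omega> / 4"
          if r: "\<tau> \<omega> \<le> of_rat r \<and> of_rat r \<le> q" for r :: rat
        proof -
          have dr: "dist (S (of_rat r) \<omega>) (S (\<tau> \<omega>) \<omega>) < \<kappa> \<omega> / 8"
          proof (cases "of_rat r = \<tau> \<omega>")
            case True then show ?thesis using kp' by simp
          next
            case False then show ?thesis using b r q by auto
          qed
          have "dist (S (of_rat r) \<omega>) (S q \<omega>) \<le> dist (S (of_rat r) \<omega>) (S (\<tau> \<omega>) \<omega>) + dist (S q \<omega>) (S (\<tau> \<omega>) \<omega>)"
            by (rule dist_triangle2)
          then show ?thesis using dr dq by (simp add: dist_norm)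
        qed
        have "\<omega> \<in> D q" unfolding D_def kq_def using w wA tq RR by auto
        then show ?thesis using qI by blast
      qed
    qed
    have incl: "D q \<inter> small_osc_event M T S (\<lambda>_. q) (kq q) \<subseteq> A \<inter> small_osc_event M T S \<tau> \<kappa>"
      if qI: "q \<in> I" for q
    proof
      fix \<omega> assume wD: "\<omega> \<in> D q \<inter> small_osc_event M T S (\<lambda>_. q) (kq q)"
      have q: "q \<in> {0..T}" using Iq qI by blast
      have w: "\<omega> \<in> space M" and wA: "\<omega> \<in> A" and tq: "\<tau> \<omega> \<le> q"
        and R: "\<And>r::rat. \<tau> \<omega> \<le> of_rat r \<Longrightarrow> of_rat r \<le> q \<Longrightarrow> norm (S (of_rat r) \<omega> - S q \<omega>) \<le> \<kappa> \<omega> / 4"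
        and Sup: "(SUP u\<in>{q..T}. norm (S u \<omega> - S q \<omega>)) < \<kappa> \<omega> / 4"
        using wD unfolding D_def small_osc_event_def kq_def by auto
      have kp': "0 < \<kappa> \<omega>" using kp w by auto
      obtain Bd where Bd: "\<forall>u\<in>{0..T}. norm (S u \<omega>) \<le> Bd"
        using cadlag_bounded[of T "\<lambda>u. S u \<omega>"] cad w unfolding cadlag_on_def by blast
      have bdd: "bdd_above ((\<lambda>u. norm (S u \<omega> - S q \<omega>)) ` {q..T})"
      proof (rule bdd_aboveI2[of _ _ "2*Bd"])
        fix u assume "u \<in> {q..T}"
        then have "norm (S u \<omega>) \<le> Bd" "norm (S q \<omega>) \<le> Bd" using Bd q by auto
        then show "norm (S u \<omega> - S q \<omega>) \<le> 2 * Bd"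
          using norm_triangle_ineq4[of "S u \<omega>" "S q \<omega>"] by linarith
      qed
      have h1: "norm (S u \<omega> - S q \<omega>) < \<kappa> \<omega> / 4" if "u \<in> {q..T}" for u
        using cSUP_upper[OF that bdd] Sup by linarith
      have h2: "norm (S u \<omega> - S q \<omega>) \<le> \<kappa> \<omega> / 4" if u: "u \<in> {\<tau> \<omega>..q}" for u
      proof (cases "u = q")
        case True then show ?thesis using kp' by simp
      next
        case False
        then have uq: "u < q" using u by auto
        show ?thesis
        proof (rule rc_le[where f="\<lambda>u. S u \<omega>" and u=u and b=q])
          show "continuous (at_right u) (\<lambda>u. S u \<omega>)" using rc w u uq q tr by force
          show "u < q" by fact
          fix r assume r: "r \<in> \<rat>" "u < r" "r < q"
          then obtain rr where rr: "r = of_rat rr" using Rats_cases by blast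
          show "norm (S r \<omega> - S q \<omega>) \<le> \<kappa> \<omega> / 4" using R[of rr] rr r u by auto
        qed
      qed
      have h3: "norm (S (\<tau> \<omega>) \<omega> - S q \<omega>) \<le> \<kappa> \<omega> / 4" using h2 tq by auto
      have all: "norm (S u \<omega> - S (\<tau> \<omega>) \<omega>) \<le> \<kappa> \<omega> / 2" if u: "u \<in> {\<tau> \<omega>..T}" for u
      proof -
        have a: "norm (S u \<omega> - S q \<omega>) \<le> \<kappa> \<omega> / 4"
        proof (cases "u \<le> q")
          case True then show ?thesis using h2 u by auto
        next
          case False then show ?thesis using h1[of u] u by auto
        qed
        have "dist (S u \<omega>) (S (\<tau> \<omega>) \<omega>) \<le> dist (S u \<omega>) (S q \<omega>) + dist (S (\<tau> \<omega>) \<omega>) (S q \<omega>)"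
          by (rule dist_triangle2)
        then show ?thesis using a h3 by (simp add: dist_norm)
      qed
      have "(SUP u\<in>{\<tau> \<omega>..T}. norm (S u \<omega> - S (\<tau> \<omega>) \<omega>)) \<le> \<kappa> \<omega> / 2"
        by (rule cSUP_least) (use tr w all in auto)
      then have "\<omega> \<in> small_osc_event M T S \<tau> \<kappa>"
        unfolding small_osc_event_def using w kp' by auto
      then show "\<omega> \<in> A \<inter> small_osc_event M T S \<tau> \<kappa>" using wA by auto
    qed
    have "\<exists>q\<in>I. 0 < measure M (D q)"
    proof (rule ccontr)
      assume nq: "\<not> (\<exists>q\<in>I. 0 < measure M (D q))"
      have z: "measure M (D q) = 0" if qq: "q \<in> I" for q
      proof -
        have "\<not> 0 < measure M (D q)" using nq qq by blast
        then show ?thesis using measure_nonneg[of M "D q"] by linarith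
      qed
      have "D q \<in> null_sets M" if "q \<in> I" for q
        using z[OF that] DM[OF that] by (simp add: emeasure_eq_measure null_sets_def)
      then have "(\<Union>q\<in>I. D q) \<in> null_sets M" by (intro null_sets_UN' cI)
      then have "A \<in> null_sets M" using null_sets_subset cover AM by blast
      then show False using Apos by (simp add: measure_def null_sets_def)
    qed
    then obtain q where qI: "q \<in> I" and qpos: "0 < measure M (D q)" by blast
    have q: "q \<in> {0..T}" using Iq qI by blast
    have kqpos: "\<forall>\<omega>\<in>space M. 0 < kq q \<omega>" using kp by (auto simp: kq_def)
    have ae: "AE \<omega> in M. 0 < condP M (F q) (small_osc_event M T S (\<lambda>_. q) (kq q)) \<omega>"
      using H q kqm[OF qI] kqpos by blast
    have kqM: "kq q \<in> borel_measurable M"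
      using measurable_from_subalg[OF filt_facts(3)[OF uf q] kqm[OF qI]] .
    have Bqm: "small_osc_event M T S (\<lambda>_. q) (kq q) \<in> sets M"
      by (rule osc_meas[OF T Sm cad _ _ kqM]) (use q in auto)
    have "0 < measure M (D q \<inter> small_osc_event M T S (\<lambda>_. q) (kq q))"
      using condP_pos_iff[OF P filt_facts(3)[OF uf q] Bqm] ae Dm[OF qI] qpos by blast
    also have "\<dots> \<le> measure M (A \<inter> small_osc_event M T S \<tau> \<kappa>)"
      by (rule finite_measure_mono[OF incl[OF qI]]) (use AM Bm in auto)
    finally show "0 < measure M (A \<inter> small_osc_event M T S \<tau> \<kappa>)" .
  qed
qed

theorem lemma2p1:
  fixes M :: "'a measure" and F :: "real \<Rightarrow> 'a measure" and T :: real
    and S :: "real \<Rightarrow> 'a \<Rightarrow> 'd::euclidean_space"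
  assumes "prob_space M"
    and "usual_filtration M F T"
    and "cadlag_on M T S"
    and "adapted_on F T S"
  shows "sticky M F T S \<longleftrightarrow>
    (\<forall>t\<in>{0..T}. \<forall>\<kappa>. \<kappa> \<in> borel_measurable (F t) \<and> (\<forall>\<omega>\<in>space M. 0 < \<kappa> \<omega>) \<longrightarrow>
       (AE \<omega> in M. 0 < condP M (F t) (small_osc_event M T S (\<lambda>_. t) \<kappa>) \<omega>))"
proof
  assume stk: "sticky M F T S"
  show "\<forall>t\<in>{0..T}. \<forall>\<kappa>. \<kappa> \<in> borel_measurable (F t) \<and> (\<forall>\<omega>\<in>space M. 0 < \<kappa> \<omega>) \<longrightarrow>
       (AE \<omega> in M. 0 < condP M (F t) (small_osc_event M T S (\<lambda>_. t) \<kappa>) \<omega>)"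
  proof (intro ballI allI impI)
    fix t and \<kappa> :: "'a \<Rightarrow> real" assume t: "t \<in> {0..T}"
      and k: "\<kappa> \<in> borel_measurable (F t) \<and> (\<forall>\<omega>\<in>space M. 0 < \<kappa> \<omega>)"
    have st: "stopping_time_on M F T (\<lambda>_. t)"
      unfolding stopping_time_on_def
    proof (intro conjI ballI)
      fix \<omega> show "t \<in> {0..T}" by fact
    next
      fix s assume s: "s \<in> {0..T}"
      show "{\<omega>\<in>space M. t \<le> s} \<in> sets (F s)"
      proof (cases "t \<le> s")
        case True
        then have "{\<omega>\<in>space M. t \<le> s} = space (F s)" using filt_facts(1)[OF assms(2) s] by simp
        then show ?thesis by (metis sets.top)
      next
        case False
        then have "{\<omega>\<in>space M. t \<le> s} = {}" by simp
        then show ?thesis by (metis sets.empty_sets)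
      qed
    qed
    have se: "sets (stopped_sigma M F T (\<lambda>_. t)) = sets (F t)"
      by (rule stopped_const_sets[OF assms(2) t])
    have sp: "space (stopped_sigma M F T (\<lambda>_. t)) = space (F t)"
      using stopped_space[of M F T "\<lambda>_. t"] filt_facts(1)[OF assms(2) t] by simp
    have km: "\<kappa> \<in> borel_measurable (stopped_sigma M F T (\<lambda>_. t))"
      using k measurable_cong_sets[OF se refl] by blast
    have "AE \<omega> in M. 0 < condP M (stopped_sigma M F T (\<lambda>_. t)) (small_osc_event M T S (\<lambda>_. t) \<kappa>) \<omega>"
      using stk st km k unfolding sticky_def by blast
    then show "AE \<omega> in M. 0 < condP M (F t) (small_osc_event M T S (\<lambda>_. t) \<kappa>) \<omega>"
      using condP_cong_sets[OF sp se] by simp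
  qed
next
  assume H: "\<forall>t\<in>{0..T}. \<forall>\<kappa>. \<kappa> \<in> borel_measurable (F t) \<and> (\<forall>\<omega>\<in>space M. 0 < \<kappa> \<omega>) \<longrightarrow>
       (AE \<omega> in M. 0 < condP M (F t) (small_osc_event M T S (\<lambda>_. t) \<kappa>) \<omega>)"
  show "sticky M F T S"
    unfolding sticky_def
  proof (intro allI impI)
    fix \<tau> :: "'a \<Rightarrow> real" and \<kappa> :: "'a \<Rightarrow> real"
    assume a: "stopping_time_on M F T \<tau> \<and> \<kappa> \<in> borel_measurable (stopped_sigma M F T \<tau>) \<and> (\<forall>\<omega>\<in>space M. 0 < \<kappa> \<omega>)"
    then show "AE \<omega> in M. 0 < condP M (stopped_sigma M F T \<tau>) (small_osc_event M T S \<tau> \<kappa>) \<omega>"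
      using sticky_of_det[OF assms H] by blast
  qed
qed

end
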